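(* Let $V$ be a braided vector space of diagonal type over a field $F$ of characteristic zero with basis $x_1,\dots,x_n$ and braiding $C(x_i\otimes x_j)=p_{i,j}x_j\otimes x_i$, and let $\mathfrak B(V)$ be its Nichols algebra. Then $\mathfrak L(V)=\mathfrak L(V)_R$ if and only if $p_{i,i}^2=1$ for all $i$ and, for all $1\le i\ne j\le n$, $p_{i,j}p_{j,i}=1$ and $p_{i,j}^3=1$. In this case $\mathfrak L(V)=\mathfrak L(V)_R=V$.
   Context: $\mathfrak B(V)=T(V)/\bigoplus_{m\ge2}\ker S_m$ is $\mathbb Z^n$-graded with $\deg x_i=e_i$; for homogeneous $u,v$ with $\deg u=\sum a_ie_i$, $\deg v=\sum b_je_j$ put $p_{u,v}=\prod p_{i,j}^{a_ib_j}$. $\mathfrak L(V)$ is the subspace of $\mathfrak B(V)$ generated by $V$ under the braided bracket $[u,v]=uv-p_{u,v}vu$ (for homogeneous $u,v$, extended bilinearly), i.e. the smallest subspace containing $V$ and closed under this bracket (the Nichols braided Lie algebra). $\mathfrak L(V)_R$ is the Lie subalgebra of $\mathfrak B(V)$ generated by $V$ under $[u,v]_R=p_{u,v}uv-p_{v,u}vu$. *)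

theory Defs
  imports "HOL-Combinatorics.Permutations"
begin

text \<open>
Model of the tensor algebra T(V) of the braided vector space V of diagonal type with
basis x_0,...,x_{n-1} (paper: x_1..x_n) and braiding c(x_i \<otimes> x_j) = p i j x_j \<otimes> x_i.
An element of T(V) is a finitely supported function from words (nat lists with letters < n)
to the field; the word [i1,...,im] stands for x_i1 \<otimes> ... \<otimes> x_im.
\<close>

definition tensor :: "nat \<Rightarrow> (nat list \<Rightarrow> 'a::zero) \<Rightarrow> bool" where
  "tensor n u \<longleftrightarrow> finite {w. u w \<noteq> 0} \<and> (\<forall>w. u w \<noteq> 0 \<longrightarrow> set w \<subseteq> {..<n})"

definition gen_x :: "nat \<Rightarrow> (nat list \<Rightarrow> 'a::{zero,one})" where
  "gen_x i = (\<lambda>w. if w = [i] then 1 else 0)"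

definition vspace :: "nat \<Rightarrow> (nat list \<Rightarrow> 'a::zero) set" where
  "vspace n = {u. tensor n u \<and> (\<forall>w. u w \<noteq> 0 \<longrightarrow> length w = 1)}"

text \<open>bicharacter p_{u,v} on words (multidegrees): product of p over all letter pairs\<close>
definition chi :: "(nat \<Rightarrow> nat \<Rightarrow> 'a::comm_ring_1) \<Rightarrow> nat list \<Rightarrow> nat list \<Rightarrow> 'a" where
  "chi p a b = (\<Prod>i<length a. \<Prod>j<length b. p (a ! i) (b ! j))"

definition tmult :: "(nat list \<Rightarrow> 'a::comm_ring_1) \<Rightarrow> (nat list \<Rightarrow> 'a) \<Rightarrow> nat list \<Rightarrow> 'a" where
  "tmult u v = (\<lambda>w. \<Sum>k\<le>length w. u (take k w) * v (drop k w))"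

text \<open>braided bracket [u,v] = uv - p_{u,v} vu on homogeneous elements (words), extended
bilinearly: the coefficient of the word w collects all splittings w = a@b
(contribution u_a v_b of ab) and w = b@a (contribution -p_{a,b} u_a v_b of ba).\<close>
definition bbr :: "(nat \<Rightarrow> nat \<Rightarrow> 'a::comm_ring_1) \<Rightarrow> (nat list \<Rightarrow> 'a) \<Rightarrow> (nat list \<Rightarrow> 'a) \<Rightarrow> nat list \<Rightarrow> 'a" where
  "bbr p u v = (\<lambda>w. \<Sum>k\<le>length w.
      u (take k w) * v (drop k w) - chi p (drop k w) (take k w) * u (drop k w) * v (take k w))"

text \<open>bracket [u,v]_R = p_{u,v} uv - p_{v,u} vu, extended bilinearly\<close>
definition rbr :: "(nat \<Rightarrow> nat \<Rightarrow> 'a::comm_ring_1) \<Rightarrow> (nat list \<Rightarrow> 'a) \<Rightarrow> (nat list \<Rightarrow> 'a) \<Rightarrow> nat list \<Rightarrow> 'a" where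
  "rbr p u v = (\<lambda>w. \<Sum>k\<le>length w.
      chi p (take k w) (drop k w) * u (take k w) * v (drop k w)
      - chi p (take k w) (drop k w) * u (drop k w) * v (take k w))"

text \<open>Braid group action (Matsumoto lift) of a permutation s of {0..<m} on a word v of
length m: T_s(v) = (\<Prod> over inversions a<b, s a > s b of p (v!a) (v!b)) * w,
where the letter at position a moves to position s a, i.e. v = permute_word s w.\<close>
definition permute_word :: "(nat \<Rightarrow> nat) \<Rightarrow> nat list \<Rightarrow> nat list" where
  "permute_word s w = map (\<lambda>a. w ! s a) [0..<length w]"

definition braid_coef :: "(nat \<Rightarrow> nat \<Rightarrow> 'a::comm_ring_1) \<Rightarrow> nat \<Rightarrow> (nat \<Rightarrow> nat) \<Rightarrow> nat list \<Rightarrow> 'a" where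
  "braid_coef p m s v = (\<Prod>(a,b)\<in>{(a,b). a < b \<and> b < m \<and> s b < s a}. p (v ! a) (v ! b))"

definition symmetrizer :: "(nat \<Rightarrow> nat \<Rightarrow> 'a::comm_ring_1) \<Rightarrow> nat \<Rightarrow> (nat list \<Rightarrow> 'a) \<Rightarrow> nat list \<Rightarrow> 'a" where
  "symmetrizer p m u = (\<lambda>w. \<Sum>s\<in>{s. s permutes {..<m}}.
      braid_coef p m s (permute_word s w) * u (permute_word s w))"

definition hcomp :: "nat \<Rightarrow> (nat list \<Rightarrow> 'a::zero) \<Rightarrow> nat list \<Rightarrow> 'a" where
  "hcomp m u = (\<lambda>w. if length w = m then u w else 0)"

definition nichols_ideal :: "(nat \<Rightarrow> nat \<Rightarrow> 'a::comm_ring_1) \<Rightarrow> nat \<Rightarrow> (nat list \<Rightarrow> 'a) set" where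
  "nichols_ideal p n = {u. tensor n u \<and> (\<forall>m<2. hcomp m u = (\<lambda>_. 0))
      \<and> (\<forall>m\<ge>2. symmetrizer p m (hcomp m u) = (\<lambda>_. 0))}"

text \<open>image in B(V) = T(V)/I of a set S of tensors, represented as S + I\<close>
definition nichols_image :: "(nat \<Rightarrow> nat \<Rightarrow> 'a::comm_ring_1) \<Rightarrow> nat \<Rightarrow> (nat list \<Rightarrow> 'a) set \<Rightarrow> (nat list \<Rightarrow> 'a) set" where
  "nichols_image p n S = {v. \<exists>u\<in>S. (\<lambda>w. u w - v w) \<in> nichols_ideal p n}"

inductive_set generated :: "((nat list \<Rightarrow> 'a::comm_ring_1) \<Rightarrow> (nat list \<Rightarrow> 'a) \<Rightarrow> nat list \<Rightarrow> 'a)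
    \<Rightarrow> nat \<Rightarrow> (nat list \<Rightarrow> 'a) set" for br n where
  gen_basis: "i < n \<Longrightarrow> gen_x i \<in> generated br n"
| gen_zero: "(\<lambda>_. 0) \<in> generated br n"
| gen_add: "u \<in> generated br n \<Longrightarrow> v \<in> generated br n \<Longrightarrow> (\<lambda>w. u w + v w) \<in> generated br n"
| gen_smult: "u \<in> generated br n \<Longrightarrow> (\<lambda>w. c * u w) \<in> generated br n"
| gen_br: "u \<in> generated br n \<Longrightarrow> v \<in> generated br n \<Longrightarrow> br u v \<in> generated br n"

definition nichols_L :: "(nat \<Rightarrow> nat \<Rightarrow> 'a::comm_ring_1) \<Rightarrow> nat \<Rightarrow> (nat list \<Rightarrow> 'a) set" where
  "nichols_L p n = nichols_image p n (generated (bbr p) n)"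

definition nichols_LR :: "(nat \<Rightarrow> nat \<Rightarrow> 'a::comm_ring_1) \<Rightarrow> nat \<Rightarrow> (nat list \<Rightarrow> 'a) set" where
  "nichols_LR p n = nichols_image p n (generated (rbr p) n)"

definition nichols_V :: "(nat \<Rightarrow> nat \<Rightarrow> 'a::comm_ring_1) \<Rightarrow> nat \<Rightarrow> (nat list \<Rightarrow> 'a) set" where
  "nichols_V p n = nichols_image p n (vspace n)"

end

theory Submission
  imports Defs
begin


definition swp :: "nat \<Rightarrow> nat list \<Rightarrow> nat list" where
  "swp k w = w[k := w!(k+1), k+1 := w!k]"

definition killed :: "(nat \<Rightarrow> nat \<Rightarrow> 'a::comm_ring_1) \<Rightarrow> nat \<Rightarrow> (nat list \<Rightarrow> 'a) \<Rightarrow> bool" where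
  "killed p k f \<longleftrightarrow> (\<forall>w. length w < k+2 \<longrightarrow> f w = 0) \<and>
     (\<forall>w. k+1 < length w \<longrightarrow> f w + p (w!(k+1)) (w!k) * f (swp k w) = 0)"

inductive_set KS :: "(nat \<Rightarrow> nat \<Rightarrow> 'a::comm_ring_1) \<Rightarrow> (nat list \<Rightarrow> 'a) set" for p where
  K_zero: "(\<lambda>_. 0) \<in> KS p"
| K_add: "f \<in> KS p \<Longrightarrow> g \<in> KS p \<Longrightarrow> (\<lambda>w. f w + g w) \<in> KS p"
| K_smult: "f \<in> KS p \<Longrightarrow> (\<lambda>w. c * f w) \<in> KS p"
| K_kill: "killed p k f \<Longrightarrow> f \<in> KS p"

definition tprod :: "(nat list \<Rightarrow> nat list \<Rightarrow> 'a::comm_ring_1) \<Rightarrow> (nat list \<Rightarrow> 'a) \<Rightarrow> (nat list \<Rightarrow> 'a) \<Rightarrow> nat list \<Rightarrow> 'a" where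
  "tprod c u v = (\<lambda>w. \<Sum>j\<le>length w. c (take j w) (drop j w) * u (take j w) * v (drop j w))"

lemma length_swp[simp]: "length (swp k w) = length w"
  by (simp add: swp_def)

lemma nth_swp: "k+1 < length w \<Longrightarrow> i < length w \<Longrightarrow>
   swp k w ! i = w ! (Transposition.transpose k (k+1) i)"
  by (auto simp: swp_def nth_list_update transpose_def)

lemma take_swp: "k+2 \<le> j \<Longrightarrow> take j (swp k w) = swp k (take j w)"
  by (simp add: swp_def take_update_swap)

lemma drop_swp_hi: "k+2 \<le> j \<Longrightarrow> drop j (swp k w) = drop j w"
  by (simp add: swp_def)

lemma take_swp_lo: "j \<le> k \<Longrightarrow> take j (swp k w) = take j w"
  by (simp add: swp_def)

lemma drop_swp_lo: "j \<le> k \<Longrightarrow> k+1 < length w \<Longrightarrow> drop j (swp k w) = swp (k - j) (drop j w)"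
  by (simp add: swp_def drop_update_swap Suc_diff_le nth_drop)

lemma K_diff: "f \<in> KS p \<Longrightarrow> g \<in> KS p \<Longrightarrow> (\<lambda>w. f w - g w) \<in> KS p"
proof -
  assume "f \<in> KS p" "g \<in> KS p"
  then have "(\<lambda>w. f w + (-1) * g w) \<in> KS p" by (intro K_add K_smult)
  then show ?thesis by simp
qed

lemma K_sum: "finite A \<Longrightarrow> (\<And>j. j \<in> A \<Longrightarrow> f j \<in> KS p) \<Longrightarrow> (\<lambda>w. \<Sum>j\<in>A. f j w) \<in> KS p"
proof (induction A rule: finite_induct)
  case empty then show ?case by (simp add: K_zero)
next
  case (insert x F)
  then have "(\<lambda>w. f x w + (\<Sum>j\<in>F. f j w)) \<in> KS p" by (intro K_add) auto
  with insert show ?case by simp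
qed

lemma K_short: "f \<in> KS p \<Longrightarrow> length w < 2 \<Longrightarrow> f w = 0"
  by (induction f rule: KS.induct) (auto simp: killed_def)

lemma tprod_killed_left:
  assumes K: "killed p k u" and C: "\<And>a b. k+1 < length a \<Longrightarrow> c (swp k a) b = c a b"
  shows "killed p k (tprod c u v)"
proof -
  have A: "u a = 0" if "length a < k+2" for a using K that by (simp add: killed_def)
  have B: "u a + p (a!(k+1)) (a!k) * u (swp k a) = 0" if "k+1 < length a" for a
    using K that by (simp add: killed_def)
  show ?thesis unfolding killed_def
  proof (intro conjI allI impI)
    fix w :: "nat list" assume "length w < k+2"
    then show "tprod c u v w = 0" unfolding tprod_def by (auto intro!: sum.neutral simp: A)
  next
    fix w :: "nat list" assume w: "k+1 < length w"
    let ?w = "swp k w"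
    have "c (take j w) (drop j w) * u (take j w) * v (drop j w) +
          p (w!(k+1)) (w!k) * (c (take j ?w) (drop j ?w) * u (take j ?w) * v (drop j ?w)) = 0"
      if j: "j \<le> length w" for j
    proof (cases "j < k+2")
      case True
      then show ?thesis using j by (simp add: A)
    next
      case False
      let ?a = "take j w"
      have la: "k+1 < length ?a" using False j by simp
      have e1: "?a!(k+1) = w!(k+1)" "?a!k = w!k" using False by auto
      have "u ?a + p (?a!(k+1)) (?a!k) * u (swp k ?a) = 0" using B la by blast
      then have "u ?a + p (w!(k+1)) (w!k) * u (swp k ?a) = 0" by (metis e1)
      then have "c ?a (drop j w) * v (drop j w) * (u ?a + p (w!(k+1)) (w!k) * u (swp k ?a)) = 0" by simp
      moreover have "take j ?w = swp k ?a" "drop j ?w = drop j w" using False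
        by (auto simp: take_swp drop_swp_hi)
      moreover have "c (swp k ?a) (drop j w) = c ?a (drop j w)" using C la by blast
      ultimately show ?thesis by (simp add: algebra_simps)
    qed
    then show "tprod c u v w + p (w!(k+1)) (w!k) * tprod c u v (swp k w) = 0"
      unfolding tprod_def by (simp add: sum_distrib_left sum.distrib[symmetric] sum.neutral)
  qed
qed

lemma tprod_hcomp: "tprod c (hcomp j v) u w =
   (if j \<le> length w then c (take j w) (drop j w) * v (take j w) * u (drop j w) else 0)"
proof -
  have "tprod c (hcomp j v) u w = (\<Sum>i\<le>length w. if i = j then c (take i w) (drop i w) * v (take i w) * u (drop i w) else 0)"
    unfolding tprod_def hcomp_def by (intro sum.cong) (auto simp: min_def)
  then show ?thesis by (simp add: sum.delta)
qed

lemma tprod_killed_right: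
  assumes K: "killed p k u" and C: "\<And>a b. k+1 < length b \<Longrightarrow> c a (swp k b) = c a b"
  shows "killed p (j+k) (tprod c (hcomp j v) u)"
proof -
  have A: "u a = 0" if "length a < k+2" for a using K that by (simp add: killed_def)
  have B: "u a + p (a!(k+1)) (a!k) * u (swp k a) = 0" if "k+1 < length a" for a
    using K that by (simp add: killed_def)
  show ?thesis unfolding killed_def
  proof (intro conjI allI impI)
    fix w :: "nat list" assume "length w < j+k+2"
    then show "tprod c (hcomp j v) u w = 0" by (simp add: tprod_hcomp A)
  next
    fix w :: "nat list" assume w: "j+k+1 < length w"
    let ?w = "swp (j+k) w"
    let ?d = "drop j w" and ?t = "take j w"
    have jl: "j \<le> length w" using w by simp
    have ld: "k+1 < length ?d" using w by simp
    have e1: "?d!(k+1) = w!(j+k+1)" "?d!k = w!(j+k)" using jl by (auto simp: nth_drop)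
    have "u ?d + p (?d!(k+1)) (?d!k) * u (swp k ?d) = 0" using B ld by blast
    then have "u ?d + p (w!(j+k+1)) (w!(j+k)) * u (swp k ?d) = 0" by (metis e1)
    then have "c ?t ?d * v ?t * (u ?d + p (w!(j+k+1)) (w!(j+k)) * u (swp k ?d)) = 0" by simp
    moreover have "take j ?w = ?t" "drop j ?w = swp k ?d" using w
      by (auto simp: take_swp_lo drop_swp_lo)
    moreover have "c ?t (swp k ?d) = c ?t ?d" using C ld by blast
    ultimately show "tprod c (hcomp j v) u w + p (w!(j+k+1)) (w!(j+k)) * tprod c (hcomp j v) u ?w = 0"
      using jl by (simp add: tprod_hcomp algebra_simps)
  qed
qed

lemma tprod_decomp:
  assumes N: "\<forall>w. v w \<noteq> 0 \<longrightarrow> length w \<le> N"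
  shows "tprod c v u w = (\<Sum>j\<le>N. tprod c (hcomp j v) u w)"
proof -
  define X where "X j = c (take j w) (drop j w) * v (take j w) * u (drop j w)" for j
  have "(\<Sum>j\<le>N. tprod c (hcomp j v) u w) = (\<Sum>j\<le>N. if j \<in> {..length w} then X j else 0)"
    by (intro sum.cong) (simp_all add: tprod_hcomp X_def)
  also have "\<dots> = sum X ({..N} \<inter> {..length w})" by (rule sum.inter_restrict[OF finite_atMost, symmetric])
  also have "\<dots> = sum X {..length w}"
  proof (rule sum.mono_neutral_left)
    show "\<forall>i\<in>{..length w} - {..N} \<inter> {..length w}. X i = 0"
    proof
      fix i assume i: "i \<in> {..length w} - {..N} \<inter> {..length w}"
      then have "length (take i w) > N" by auto
      then have "v (take i w) = 0" using N by (meson not_le)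
      then show "X i = 0" by (simp add: X_def)
    qed
  qed auto
  also have "\<dots> = tprod c v u w" by (simp add: tprod_def X_def)
  finally show ?thesis by simp
qed

lemma tensor_bound: "tensor n v \<Longrightarrow> \<exists>N. \<forall>w. v w \<noteq> 0 \<longrightarrow> length w \<le> N"
proof -
  assume "tensor n v"
  then have "finite {w. v w \<noteq> 0}" by (simp add: tensor_def)
  then have "finite (length ` {w. v w \<noteq> 0})" by simp
  then obtain N where "\<forall>x\<in>length ` {w. v w \<noteq> 0}. x \<le> N" using finite_nat_set_iff_bounded_le by blast
  then show ?thesis by auto
qed

lemma tprod_add_left: "tprod c (\<lambda>w. f w + g w) v = (\<lambda>w. tprod c f v w + tprod c g v w)"
  by (simp add: tprod_def algebra_simps sum.distrib)
lemma tprod_smult_left: "tprod c (\<lambda>w. a * f w) v = (\<lambda>w. a * tprod c f v w)"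
  by (simp add: tprod_def algebra_simps sum_distrib_left)
lemma tprod_zero_left: "tprod c (\<lambda>w. 0) v = (\<lambda>w. 0)"
  by (simp add: tprod_def)
lemma tprod_add_right: "tprod c v (\<lambda>w. f w + g w) = (\<lambda>w. tprod c v f w + tprod c v g w)"
  by (simp add: tprod_def algebra_simps sum.distrib)
lemma tprod_smult_right: "tprod c v (\<lambda>w. a * f w) = (\<lambda>w. a * tprod c v f w)"
  by (simp add: tprod_def algebra_simps sum_distrib_left)
lemma tprod_zero_right: "tprod c v (\<lambda>w. 0) = (\<lambda>w. 0)"
  by (simp add: tprod_def)

lemma K_tprod_left:
  assumes "f \<in> KS p" and C: "\<And>a b k. k+1 < length a \<Longrightarrow> c (swp k a) b = c a b"
  shows "tprod c f v \<in> KS p"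
  using assms(1)
proof (induction f rule: KS.induct)
  case K_zero then show ?case by (simp add: tprod_zero_left KS.K_zero)
next
  case (K_add f g) then show ?case by (simp add: tprod_add_left KS.K_add)
next
  case (K_smult f a) then show ?case by (simp add: tprod_smult_left KS.K_smult)
next
  case (K_kill k f) then show ?case by (intro KS.K_kill tprod_killed_left C)
qed

lemma K_tprod_right:
  assumes "f \<in> KS p" and C: "\<And>a b k. k+1 < length b \<Longrightarrow> c a (swp k b) = c a b"
    and T: "tensor n v"
  shows "tprod c v f \<in> KS p"
  using assms(1)
proof (induction f rule: KS.induct)
  case K_zero then show ?case by (simp add: tprod_zero_right KS.K_zero)
next
  case (K_add f g) then show ?case by (simp add: tprod_add_right KS.K_add)
next
  case (K_smult f a) then show ?case by (simp add: tprod_smult_right KS.K_smult)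
next
  case (K_kill k f)
  obtain N where N: "\<forall>w. v w \<noteq> 0 \<longrightarrow> length w \<le> N" using tensor_bound[OF T] by blast
  have "tprod c v f = (\<lambda>w. \<Sum>j\<le>N. tprod c (hcomp j v) f w)"
    using tprod_decomp[OF N] by blast
  moreover have "(\<lambda>w. \<Sum>j\<le>N. tprod c (hcomp j v) f w) \<in> KS p"
  proof (intro K_sum)
    fix j show "tprod c (hcomp j v) f \<in> KS p"
      by (rule KS.K_kill[of p "j + k"], intro tprod_killed_right K_kill C)
  qed auto
  ultimately show ?case by simp
qed

abbreviation tau :: "nat \<Rightarrow> nat \<Rightarrow> nat" where "tau k \<equiv> Transposition.transpose k (Suc k)"

lemma tau_mono: "a < b \<Longrightarrow> (a,b) \<noteq> (k, Suc k) \<Longrightarrow> tau k a < tau k b"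
  by (auto simp: transpose_def)

lemma tau_lt: "Suc k < m \<Longrightarrow> a < m \<Longrightarrow> tau k a < m"
  by (auto simp: transpose_def)

lemma pw_comp:
  assumes "k+1 < length w"
  shows "permute_word (s \<circ> tau k) w = swp k (permute_word s w)"
proof (rule nth_equalityI)
  show "length (permute_word (s \<circ> tau k) w) = length (swp k (permute_word s w))"
    by (simp add: permute_word_def)
  fix i assume "i < length (permute_word (s \<circ> tau k) w)"
  then have i: "i < length w" by (simp add: permute_word_def)
  have "tau k i < length w" using tau_lt[OF _ i] assms by simp
  then show "permute_word (s \<circ> tau k) w ! i = swp k (permute_word s w) ! i"
    using assms i by (simp add: nth_swp permute_word_def)
qed

lemma braid_swap:
  assumes s: "s permutes {..<m}" and km: "k+1 < m" and sk: "s k < s (k+1)" and lv: "length v = m"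
  shows "braid_coef p m (s \<circ> tau k) (swp k v) = p (v!(k+1)) (v!k) * braid_coef p m s v"
proof -
  define I where "I = {(a,b). a < b \<and> b < m \<and> s b < s a}"
  define J where "J = {(a,b). a < b \<and> b < m \<and> (s \<circ> tau k) b < (s \<circ> tau k) a}"
  define \<sigma> where "\<sigma> = (\<lambda>(a::nat,b::nat). (tau k a, tau k b))"
  have E: "J = insert (k, Suc k) (\<sigma> ` I)"
  proof (rule set_eqI, rule iffI)
    fix x assume "x \<in> J"
    then obtain a b where x: "x = (a,b)" "a < b" "b < m" "s (tau k b) < s (tau k a)"
      unfolding J_def by auto
    show "x \<in> insert (k, Suc k) (\<sigma> ` I)"
    proof (cases "(a,b) = (k, Suc k)")
      case True then show ?thesis using x by simp
    next
      case False
      have "(tau k a, tau k b) \<in> I" unfolding I_def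
        using x tau_mono[OF x(2) False] tau_lt[of k m b] km by auto
      moreover have "x = \<sigma> (tau k a, tau k b)" using x by (simp add: \<sigma>_def)
      ultimately show ?thesis by blast
    qed
  next
    fix x assume x: "x \<in> insert (k, Suc k) (\<sigma> ` I)"
    show "x \<in> J"
    proof (cases "x = (k, Suc k)")
      case True then show ?thesis using km sk by (simp add: J_def)
    next
      case False
      then obtain a b where ab: "(a,b) \<in> I" "x = (tau k a, tau k b)" using x by (auto simp: \<sigma>_def)
      have "(a,b) \<noteq> (k, Suc k)" using ab sk by (auto simp: I_def)
      then show ?thesis using ab tau_mono[of a b k] tau_lt[of k m b] km by (auto simp: I_def J_def)
    qed
  qed
  have N: "(k, Suc k) \<notin> \<sigma> ` I"
  proof
    assume "(k, Suc k) \<in> \<sigma> ` I"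
    then obtain a b where "(a,b) \<in> I" "tau k a = k" "tau k b = Suc k" by (auto simp: \<sigma>_def)
    then have "a = Suc k" "b = k" by (metis transpose_involutory transpose_apply_first transpose_apply_second)+
    with \<open>(a,b) \<in> I\<close> show False by (simp add: I_def)
  qed
  have inj: "inj_on \<sigma> I"
    by (auto simp: inj_on_def \<sigma>_def dest: transpose_eq_imp_eq)
  have fin: "finite I"
    by (rule finite_subset[of _ "{..<m} \<times> {..<m}"]) (auto simp: I_def)
  have "braid_coef p m (s \<circ> tau k) (swp k v) = (\<Prod>(a,b)\<in>J. p (swp k v ! a) (swp k v ! b))"
    by (simp add: braid_coef_def J_def)
  also have "\<dots> = p (swp k v ! k) (swp k v ! Suc k) * (\<Prod>x\<in>\<sigma> ` I. (\<lambda>(a,b). p (swp k v ! a) (swp k v ! b)) x)"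
    using E N fin by simp
  also have "(\<Prod>x\<in>\<sigma> ` I. (\<lambda>(a,b). p (swp k v ! a) (swp k v ! b)) x) =
             (\<Prod>x\<in>I. (\<lambda>(a,b). p (swp k v ! a) (swp k v ! b)) (\<sigma> x))"
    using inj by (simp add: prod.reindex)
  also have "\<dots> = (\<Prod>x\<in>I. (\<lambda>(a,b). p (v ! a) (v ! b)) x)"
  proof (rule prod.cong)
    fix x assume "x \<in> I"
    then obtain a b where x: "x = (a,b)" "a < m" "b < m" by (auto simp: I_def)
    have "tau k a < length v" "tau k b < length v" using tau_lt x km lv by auto
    then show "(\<lambda>(a,b). p (swp k v ! a) (swp k v ! b)) (\<sigma> x) = (\<lambda>(a,b). p (v ! a) (v ! b)) x"
      using x km lv by (simp add: \<sigma>_def nth_swp)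
  qed simp
  finally have X: "braid_coef p m (s \<circ> tau k) (swp k v) = p (swp k v ! k) (swp k v ! Suc k) * (\<Prod>x\<in>I. (\<lambda>(a,b). p (v ! a) (v ! b)) x)" .
  moreover have "swp k v ! k = v ! Suc k" "swp k v ! Suc k = v ! k"
    using km lv by (auto simp: swp_def nth_list_update)
  ultimately show ?thesis by (simp add: braid_coef_def I_def)
qed

lemma sym_killed:
  assumes K: "killed p k f" and km: "k+1 < m" and lw: "length w = m"
  shows "(\<Sum>s\<in>{s. s permutes {..<m}}. braid_coef p m s (permute_word s w) * f (permute_word s w)) = 0"
proof -
  define P where "P = {s. s permutes {..<m}}"
  define A where "A = {s\<in>P. s k < s (k+1)}"
  define B where "B = {s\<in>P. s (k+1) < s k}"
  define F where "F s = braid_coef p m s (permute_word s w) * f (permute_word s w)" for s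
  have finP: "finite P" unfolding P_def by (rule finite_permutations) simp
  have PAB: "P = A \<union> B"
  proof -
    have "s k \<noteq> s (k+1)" if "s \<in> P" for s
      using that permutes_inj[of s "{..<m}"] unfolding P_def inj_def
      by (metis Suc_eq_plus1 n_not_Suc_n mem_Collect_eq)
    then show ?thesis unfolding A_def B_def
      by (auto, metis Suc_eq_plus1 linorder_neqE_nat)
  qed
  have dis: "A \<inter> B = {}" by (auto simp: A_def B_def)
  have tp: "tau k permutes {..<m}" using km by (intro permutes_swap_id) auto
  have sB: "sum F B = sum (\<lambda>s. F (s \<circ> tau k)) A"
  proof (rule sum.reindex_bij_witness[of _ "\<lambda>s. s \<circ> tau k" "\<lambda>s. s \<circ> tau k"])
    fix s assume "s \<in> A"
    then show "s \<circ> tau k \<circ> tau k = s" by (simp add: comp_assoc)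
    show "s \<circ> tau k \<in> B" using \<open>s \<in> A\<close> tp by (auto simp: A_def B_def P_def permutes_compose)
  next
    fix s assume "s \<in> B"
    then show "s \<circ> tau k \<circ> tau k = s" by (simp add: comp_assoc)
    show "s \<circ> tau k \<in> A" using \<open>s \<in> B\<close> tp by (auto simp: A_def B_def P_def permutes_compose)
  qed (simp add: comp_assoc)
  have "F s + F (s \<circ> tau k) = 0" if "s \<in> A" for s
  proof -
    define v where "v = permute_word s w"
    have lv: "length v = m" by (simp add: v_def permute_word_def lw)
    have sp: "s permutes {..<m}" "s k < s (k+1)" using that by (auto simp: A_def P_def)
    have F1: "F (s \<circ> tau k) = p (v!(k+1)) (v!k) * braid_coef p m s v * f (swp k v)"
      using braid_swap[where p=p, OF sp(1) km sp(2) lv] pw_comp[of k w s] km lw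
      by (simp add: F_def v_def)
    have F0: "F s = braid_coef p m s v * f v" by (simp add: F_def v_def)
    have Z: "f v + p (v!(k+1)) (v!k) * f (swp k v) = 0" using K km lv by (simp add: killed_def)
    have "F s + F (s \<circ> tau k) = braid_coef p m s v * (f v + p (v!(k+1)) (v!k) * f (swp k v))"
      unfolding F0 F1 by (simp add: algebra_simps)
    also have "\<dots> = 0" by (simp only: Z mult_zero_right)
    finally show ?thesis .
  qed
  then have "sum F A + sum (\<lambda>s. F (s \<circ> tau k)) A = 0"
    by (simp add: sum.distrib[symmetric])
  then have "sum F P = 0" using PAB dis finP sB by (simp add: sum.union_disjoint)
  then show ?thesis by (simp add: F_def P_def)
qed

lemma length_pw[simp]: "length (permute_word s w) = length w"
  by (simp add: permute_word_def)

lemma hcomp_add: "hcomp m (\<lambda>w. (f w::'a::comm_ring_1) + g w) = (\<lambda>w. hcomp m f w + hcomp m g w)"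
  by (auto simp: hcomp_def fun_eq_iff)
lemma hcomp_smult: "hcomp m (\<lambda>w. (a::'a::comm_ring_1) * f w) = (\<lambda>w. a * hcomp m f w)"
  by (auto simp: hcomp_def fun_eq_iff)
lemma hcomp_zero: "hcomp m (\<lambda>w. 0) = (\<lambda>w. 0)"
  by (simp add: hcomp_def fun_eq_iff)
lemma sym_add: "symmetrizer p m (\<lambda>w. f w + g w) = (\<lambda>w. symmetrizer p m f w + symmetrizer p m g w)"
  by (simp add: symmetrizer_def fun_eq_iff algebra_simps sum.distrib)
lemma sym_smult: "symmetrizer p m (\<lambda>w. a * f w) = (\<lambda>w. a * symmetrizer p m f w)"
  by (simp add: symmetrizer_def fun_eq_iff algebra_simps sum_distrib_left)
lemma sym_zero: "symmetrizer p m (\<lambda>w. 0) = (\<lambda>w. 0)"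
  by (simp add: symmetrizer_def fun_eq_iff)

lemma K_sym: "f \<in> KS p \<Longrightarrow> symmetrizer p m (hcomp m f) = (\<lambda>_. 0)"
proof (induction f rule: KS.induct)
  case K_zero then show ?case by (simp add: hcomp_zero sym_zero)
next
  case (K_add f g) then show ?case by (simp add: hcomp_add sym_add)
next
  case (K_smult f a) then show ?case by (simp add: hcomp_smult sym_smult)
next
  case (K_kill k f)
  show ?case
  proof (cases "m < k+2")
    case True
    then have "hcomp m f = (\<lambda>w. 0)" using K_kill by (auto simp: hcomp_def killed_def fun_eq_iff)
    then show ?thesis by (simp add: sym_zero)
  next
    case False
    show ?thesis
    proof (rule ext)
      fix w :: "nat list"
      show "symmetrizer p m (hcomp m f) w = 0"
      proof (cases "length w = m")
        case True
        have "symmetrizer p m (hcomp m f) w =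
          (\<Sum>s\<in>{s. s permutes {..<m}}. braid_coef p m s (permute_word s w) * f (permute_word s w))"
          unfolding symmetrizer_def by (intro sum.cong) (simp_all add: hcomp_def True)
        also have "\<dots> = 0" using sym_killed[OF K_kill] False True by simp
        finally show ?thesis .
      next
        case False
        then show ?thesis by (simp add: symmetrizer_def hcomp_def)
      qed
    qed
  qed
qed

lemma K_in_I: "f \<in> KS p \<Longrightarrow> tensor n f \<Longrightarrow> f \<in> nichols_ideal p n"
  unfolding nichols_ideal_def
proof (intro CollectI conjI allI impI)
  fix m :: nat assume "f \<in> KS p" "m < 2"
  then show "hcomp m f = (\<lambda>_. 0)" by (auto simp: hcomp_def fun_eq_iff K_short)
qed (auto simp: K_sym)

lemma prod_swp:
  assumes "k+1 < length a"
  shows "(\<Prod>i<length a. h (swp k a ! i)) = (\<Prod>i<length a. h (a ! i))"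
proof -
  have tp: "tau k permutes {..<length a}" using assms by (intro permutes_swap_id) auto
  have "(\<Prod>i<length a. h (a ! i)) = (\<Prod>i<length a. ((\<lambda>i. h (a ! i)) \<circ> tau k) i)"
    by (rule prod.permute[OF tp])
  also have "\<dots> = (\<Prod>i<length a. h (swp k a ! i))"
    using assms by (intro prod.cong) (auto simp: nth_swp)
  finally show ?thesis by simp
qed

lemma chi_swp_left: "k+1 < length a \<Longrightarrow> chi p (swp k a) b = chi p a b"
  unfolding chi_def using prod_swp[of k a "\<lambda>x. \<Prod>j<length b. p x (b ! j)"] by simp

lemma chi_swp_right: "k+1 < length b \<Longrightarrow> chi p a (swp k b) = chi p a b"
  unfolding chi_def by (simp add: prod_swp[of k b "\<lambda>y. p _ y"])

lemma bbr_tprod: "bbr p u v = (\<lambda>w. tprod (\<lambda>a b. 1) u v w - tprod (\<lambda>a b. chi p b a) v u w)"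
  by (simp add: bbr_def tprod_def fun_eq_iff sum_subtractf algebra_simps)

lemma rbr_tprod: "rbr p u v = (\<lambda>w. tprod (chi p) u v w - tprod (chi p) v u w)"
  by (simp add: rbr_def tprod_def fun_eq_iff sum_subtractf algebra_simps)

lemma tensor_zero: "tensor n (\<lambda>w. 0)"
  by (simp add: tensor_def)

lemma tensor_add:
  assumes "tensor n f" "tensor n g"
  shows "tensor n (\<lambda>w. f w + (g w::'a::comm_ring_1))"
proof -
  have a: "finite {w. f w \<noteq> 0}" "\<forall>w. f w \<noteq> 0 \<longrightarrow> set w \<subseteq> {..<n}"
     "finite {w. g w \<noteq> 0}" "\<forall>w. g w \<noteq> 0 \<longrightarrow> set w \<subseteq> {..<n}"
    using assms by (auto simp: tensor_def)
  have "{w. f w + g w \<noteq> 0} \<subseteq> {w. f w \<noteq> 0} \<union> {w. g w \<noteq> 0}" by auto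
  then have "finite {w. f w + g w \<noteq> 0}" using a by (meson finite_Un finite_subset)
  moreover have "set w \<subseteq> {..<n}" if "f w + g w \<noteq> 0" for w
  proof (cases "f w = 0")
    case True then show ?thesis using a that by auto
  next
    case False then show ?thesis using a by auto
  qed
  ultimately show ?thesis unfolding tensor_def by blast
qed

lemma tensor_smult:
  assumes "tensor n f"
  shows "tensor n (\<lambda>w. (a::'a::comm_ring_1) * f w)"
proof -
  have a: "finite {w. f w \<noteq> 0}" "\<forall>w. f w \<noteq> 0 \<longrightarrow> set w \<subseteq> {..<n}"
    using assms by (auto simp: tensor_def)
  have "{w. a * f w \<noteq> 0} \<subseteq> {w. f w \<noteq> 0}" by auto
  then have "finite {w. a * f w \<noteq> 0}" using a by (meson finite_subset)
  moreover have "set w \<subseteq> {..<n}" if "a * f w \<noteq> 0" for w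
  proof -
    have "f w \<noteq> 0" using that by auto
    then show ?thesis using a by blast
  qed
  ultimately show ?thesis unfolding tensor_def by blast
qed

lemma tensor_diff: "tensor n f \<Longrightarrow> tensor n g \<Longrightarrow> tensor n (\<lambda>w. f w - (g w::'a::comm_ring_1))"
  using tensor_add[of n f "\<lambda>w. (-1) * g w"] tensor_smult[of n g "-1"] by simp

lemma tensor_hcomp: "tensor n f \<Longrightarrow> tensor n (hcomp m f)"
  unfolding tensor_def hcomp_def
  by (auto intro: finite_subset[of _ "{w. f w \<noteq> 0}"])

lemma tensor_tprod:
  assumes "tensor n u" "tensor n v"
  shows "tensor n (tprod c u v)"
proof -
  let ?U = "{w. u w \<noteq> 0}" and ?V = "{w. v w \<noteq> 0}"
  have fin: "finite ?U" "finite ?V" using assms by (auto simp: tensor_def)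
  have sub: "{w. tprod c u v w \<noteq> 0} \<subseteq> (\<lambda>(a,b). a @ b) ` (?U \<times> ?V)"
  proof
    fix w assume "w \<in> {w. tprod c u v w \<noteq> 0}"
    then obtain j where "c (take j w) (drop j w) * u (take j w) * v (drop j w) \<noteq> 0"
      unfolding tprod_def by (auto elim: sum.not_neutral_contains_not_neutral)
    then have "take j w \<in> ?U" "drop j w \<in> ?V" by auto
    then show "w \<in> (\<lambda>(a,b). a @ b) ` (?U \<times> ?V)"
      by (intro image_eqI[of _ _ "(take j w, drop j w)"]) auto
  qed
  have "finite {w. tprod c u v w \<noteq> 0}" by (rule finite_subset[OF sub]) (use fin in auto)
  moreover have "set w \<subseteq> {..<n}" if "tprod c u v w \<noteq> 0" for w
  proof -
    have "w \<in> (\<lambda>(a,b). a @ b) ` (?U \<times> ?V)" using sub that by blast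
    then obtain a b where "a \<in> ?U" "b \<in> ?V" "w = a @ b" by auto
    then show ?thesis using assms by (auto simp: tensor_def)
  qed
  ultimately show ?thesis by (simp add: tensor_def)
qed

lemma tprod_short:
  assumes "u [] = 0" "v [] = 0" "length w < 2"
  shows "tprod c u v w = 0"
  unfolding tprod_def
proof (rule sum.neutral, rule ballI)
  fix j assume "j \<in> {..length w}"
  then have "take j w = [] \<or> drop j w = []" using assms(3) by (cases j) auto
  then show "c (take j w) (drop j w) * u (take j w) * v (drop j w) = 0" using assms by auto
qed

lemma tprod_split:
  "tprod c u v w = tprod c u1 v1 w + tprod c u1 (\<lambda>x. v x - v1 x) w
     + tprod c (\<lambda>x. u x - u1 x) v1 w + tprod c (\<lambda>x. u x - u1 x) (\<lambda>x. v x - v1 x) w"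
  unfolding tprod_def by (simp add: sum.distrib[symmetric] algebra_simps)

lemma tensor_gen_x: "i < n \<Longrightarrow> tensor n (gen_x i)"
proof -
  assume i: "i < n"
  have "{w. gen_x i w \<noteq> (0::'a)} \<subseteq> {[i]}" by (auto simp: gen_x_def)
  then have "finite {w. gen_x i w \<noteq> (0::'a)}" by (rule finite_subset) simp
  moreover have "\<forall>w. gen_x i w \<noteq> (0::'a) \<longrightarrow> set w \<subseteq> {..<n}" using i
    by (auto simp: gen_x_def split: if_splits)
  ultimately show "tensor n (gen_x i :: nat list \<Rightarrow> 'a)" by (simp add: tensor_def)
qed

lemma gen_good:
  fixes br :: "(nat list \<Rightarrow> 'a::comm_ring_1) \<Rightarrow> (nat list \<Rightarrow> 'a) \<Rightarrow> nat list \<Rightarrow> 'a"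
  assumes br: "\<And>u v. br u v = (\<lambda>w. tprod c1 u v w - tprod c2 v u w)"
    and c1L: "\<And>a b k. k+1 < length a \<Longrightarrow> c1 (swp k a) b = c1 a b"
    and c1R: "\<And>a b k. k+1 < length b \<Longrightarrow> c1 a (swp k b) = c1 a b"
    and c2L: "\<And>a b k. k+1 < length a \<Longrightarrow> c2 (swp k a) b = c2 a b"
    and c2R: "\<And>a b k. k+1 < length b \<Longrightarrow> c2 a (swp k b) = c2 a b"
    and deg1: "\<And>u v. tensor n u \<Longrightarrow> tensor n v \<Longrightarrow> (\<forall>w. length w \<noteq> 1 \<longrightarrow> u w = 0)
        \<Longrightarrow> (\<forall>w. length w \<noteq> 1 \<longrightarrow> v w = 0) \<Longrightarrow> killed p 0 (br u v)"
  shows "u \<in> generated br n \<Longrightarrow> tensor n u \<and> u [] = 0 \<and> (\<lambda>w. u w - hcomp 1 u w) \<in> KS p"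
proof (induction u rule: generated.induct)
  case (gen_basis i)
  have "(\<lambda>w. gen_x i w - hcomp 1 (gen_x i) w) = (\<lambda>w. 0::'a)"
    by (auto simp: gen_x_def hcomp_def fun_eq_iff)
  moreover have "tensor n (gen_x i :: nat list \<Rightarrow> 'a)" using gen_basis by (rule tensor_gen_x)
  moreover have "gen_x i [] = (0::'a)" by (simp add: gen_x_def)
  ultimately show ?case by (simp add: KS.K_zero)
next
  case gen_zero
  then show ?case by (simp add: tensor_zero hcomp_def KS.K_zero)
next
  case (gen_add u v)
  have "(\<lambda>w. u w + v w - hcomp 1 (\<lambda>w. u w + v w) w) =
        (\<lambda>w. (u w - hcomp 1 u w) + (v w - hcomp 1 v w))"
    by (simp add: hcomp_add fun_eq_iff)
  then show ?case using gen_add by (simp add: tensor_add KS.K_add)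
next
  case (gen_smult u c)
  have "(\<lambda>w. c * u w - hcomp 1 (\<lambda>w. c * u w) w) = (\<lambda>w. c * (u w - hcomp 1 u w))"
    by (simp add: hcomp_smult fun_eq_iff algebra_simps)
  then show ?case using gen_smult by (simp add: tensor_smult KS.K_smult)
next
  case (gen_br u v)
  define u1 where "u1 = hcomp 1 u"
  define v1 where "v1 = hcomp 1 v"
  define u' where "u' = (\<lambda>w. u w - u1 w)"
  define v' where "v' = (\<lambda>w. v w - v1 w)"
  have tu: "tensor n u" "tensor n v" "u [] = 0" "v [] = 0" using gen_br by auto
  have Ku: "u' \<in> KS p" "v' \<in> KS p" using gen_br by (auto simp: u'_def v'_def u1_def v1_def)
  have t1: "tensor n u1" "tensor n v1" using tu by (auto simp: u1_def v1_def tensor_hcomp)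
  have tt: "tensor n u'" "tensor n v'" using tu t1 by (auto simp: u'_def v'_def tensor_diff)
  have d1: "\<forall>w. length w \<noteq> 1 \<longrightarrow> u1 w = 0" "\<forall>w. length w \<noteq> 1 \<longrightarrow> v1 w = 0"
    by (auto simp: u1_def v1_def hcomp_def)
  have k0: "br u1 v1 \<in> KS p" by (rule KS.K_kill, rule deg1[OF t1 d1])
  have e: "br u v = (\<lambda>w. br u1 v1 w + (tprod c1 u1 v' w + tprod c1 u' v1 w + tprod c1 u' v' w)
     - (tprod c2 v1 u' w + tprod c2 v' u1 w + tprod c2 v' u' w))"
    unfolding br fun_eq_iff
    using tprod_split[of c1 u v _ u1 v1] tprod_split[of c2 v u _ v1 u1]
    by (simp add: u'_def v'_def algebra_simps)
  have Kall: "br u v \<in> KS p"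
  proof -
    have "tprod c1 u1 v' \<in> KS p" by (rule K_tprod_right[OF Ku(2) c1R t1(1)])
    moreover have "tprod c1 u' v1 \<in> KS p" by (rule K_tprod_left[OF Ku(1) c1L])
    moreover have "tprod c1 u' v' \<in> KS p" by (rule K_tprod_left[OF Ku(1) c1L])
    moreover have "tprod c2 v1 u' \<in> KS p" by (rule K_tprod_right[OF Ku(1) c2R t1(2)])
    moreover have "tprod c2 v' u1 \<in> KS p" by (rule K_tprod_left[OF Ku(2) c2L])
    moreover have "tprod c2 v' u' \<in> KS p" by (rule K_tprod_left[OF Ku(2) c2L])
    ultimately show ?thesis unfolding e by (intro K_diff K_add k0) auto
  qed
  have tb: "tensor n (br u v)" unfolding br by (intro tensor_diff tensor_tprod tu)
  have sh: "br u v w = 0" if "length w < 2" for w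
    unfolding br using tprod_short[of u v w c1] tprod_short[of v u w c2] tu that by simp
  have "(\<lambda>w. br u v w - hcomp 1 (br u v) w) = br u v"
    by (auto simp: hcomp_def fun_eq_iff sh)
  then show ?case using Kall tb sh by simp
qed

lemma tprod_deg1:
  assumes "\<forall>w. length w \<noteq> 1 \<longrightarrow> u w = 0" "\<forall>w. length w \<noteq> 1 \<longrightarrow> v w = 0" "length w \<noteq> 2"
  shows "tprod c u v w = 0"
  unfolding tprod_def
proof (rule sum.neutral, rule ballI)
  fix j assume "j \<in> {..length w}"
  then have "length (take j w) \<noteq> 1 \<or> length (drop j w) \<noteq> 1" using assms(3) by auto
  then show "c (take j w) (drop j w) * u (take j w) * v (drop j w) = 0" using assms by auto
qed

lemma tprod_2:
  assumes "\<forall>w. length w \<noteq> 1 \<longrightarrow> u w = 0" "\<forall>w. length w \<noteq> 1 \<longrightarrow> v w = 0"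
  shows "tprod c u v [a,b] = c [a] [b] * u [a] * v [b]"
  using assms unfolding tprod_def by (simp add: numeral_2_eq_2)

lemma chi_11: "chi p [a] [b] = p a b"
  by (simp add: chi_def)

lemma killed_deg2:
  assumes "\<forall>w. length w \<noteq> 2 \<longrightarrow> f w = 0" "\<forall>a b. f [a,b] + p b a * f [b,a] = 0"
  shows "killed p 0 f"
  unfolding killed_def
proof (intro conjI allI impI)
  fix w :: "nat list" assume "length w < 0 + 2" then show "f w = 0" using assms by auto
next
  fix w :: "nat list" assume w: "0 + 1 < length w"
  show "f w + p (w ! (0 + 1)) (w ! 0) * f (swp 0 w) = 0"
  proof (cases "length w = 2")
    case True
    then obtain a b where "w = [a,b]"
      by (metis (no_types, lifting) One_nat_def Suc_length_conv length_0_conv numeral_2_eq_2)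
    then show ?thesis using assms by (simp add: swp_def)
  next
    case False then show ?thesis using assms by simp
  qed
qed

lemma tensor_deg1_zero: "tensor n u \<Longrightarrow> \<not> a < n \<Longrightarrow> u [a] = 0"
  by (auto simp: tensor_def)

lemma deg1_bbr:
  fixes p :: "nat \<Rightarrow> nat \<Rightarrow> 'a::field"
  assumes C1: "\<forall>i<n. (p i i)^2 = 1" and C2: "\<forall>i<n. \<forall>j<n. i \<noteq> j \<longrightarrow> p i j * p j i = 1"
    and tu: "tensor n u" "tensor n v"
    and du: "\<forall>w. length w \<noteq> 1 \<longrightarrow> u w = 0" "\<forall>w. length w \<noteq> 1 \<longrightarrow> v w = 0"
  shows "killed p 0 (bbr p u v)"
proof (rule killed_deg2)
  show "\<forall>w. length w \<noteq> 2 \<longrightarrow> bbr p u v w = 0"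
    by (simp add: bbr_tprod tprod_deg1 du)
  have E: "bbr p u v [a,b] = u [a] * v [b] - p b a * u [b] * v [a]" for a b
    by (simp add: bbr_tprod tprod_2 du chi_11)
  show "\<forall>a b. bbr p u v [a,b] + p b a * bbr p u v [b,a] = 0"
  proof (intro allI)
    fix a b
    have "bbr p u v [a,b] + p b a * bbr p u v [b,a] = u [a] * v [b] * (1 - p a b * p b a)"
      by (simp add: E algebra_simps)
    also have "\<dots> = 0"
    proof (cases "a < n \<and> b < n")
      case True
      then have "p a b * p b a = 1" using C1 C2 by (cases "a = b") (auto simp: power2_eq_square)
      then show ?thesis by simp
    next
      case False then show ?thesis using tensor_deg1_zero[OF tu(1)] tensor_deg1_zero[OF tu(2)] by auto
    qed
    finally show "bbr p u v [a,b] + p b a * bbr p u v [b,a] = 0" .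
  qed
qed

lemma deg1_rbr:
  fixes p :: "nat \<Rightarrow> nat \<Rightarrow> 'a::field"
  assumes C2: "\<forall>i<n. \<forall>j<n. i \<noteq> j \<longrightarrow> p i j * p j i = 1 \<and> (p i j)^3 = 1"
    and tu: "tensor n u" "tensor n v"
    and du: "\<forall>w. length w \<noteq> 1 \<longrightarrow> u w = 0" "\<forall>w. length w \<noteq> 1 \<longrightarrow> v w = 0"
  shows "killed p 0 (rbr p u v)"
proof (rule killed_deg2)
  show "\<forall>w. length w \<noteq> 2 \<longrightarrow> rbr p u v w = 0"
    by (simp add: rbr_tprod tprod_deg1 du)
  have E: "rbr p u v [a,b] = p a b * (u [a] * v [b] - u [b] * v [a])" for a b
    by (simp add: rbr_tprod tprod_2 du chi_11 algebra_simps)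
  show "\<forall>a b. rbr p u v [a,b] + p b a * rbr p u v [b,a] = 0"
  proof (intro allI)
    fix a b
    have "rbr p u v [a,b] + p b a * rbr p u v [b,a] = (u [a] * v [b] - u [b] * v [a]) * (p a b - p b a * p b a)"
      by (simp add: E algebra_simps)
    also have "\<dots> = 0"
    proof (cases "a < n \<and> b < n \<and> a \<noteq> b")
      case True
      then have h: "p a b * p b a = 1" "(p b a)^3 = 1" using C2 by auto
      have "p a b = p a b * (p b a)^3" using h by simp
      also have "\<dots> = (p a b * p b a) * (p b a * p b a)" by (simp add: power3_eq_cube algebra_simps)
      finally have "p a b - p b a * p b a = 0" using h by simp
      then show ?thesis by simp
    next
      case False then show ?thesis using tensor_deg1_zero[OF tu(1)] tensor_deg1_zero[OF tu(2)] by auto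
    qed
    finally show "rbr p u v [a,b] + p b a * rbr p u v [b,a] = 0" .
  qed
qed

lemma I_add: "f \<in> nichols_ideal p n \<Longrightarrow> g \<in> nichols_ideal p n \<Longrightarrow> (\<lambda>w. f w + g w) \<in> nichols_ideal p n"
  unfolding nichols_ideal_def by (auto simp: tensor_add hcomp_add sym_add)

lemma I_smult: "f \<in> nichols_ideal p n \<Longrightarrow> (\<lambda>w. a * f w) \<in> nichols_ideal p n"
  unfolding nichols_ideal_def by (auto simp: tensor_smult hcomp_smult sym_smult)

lemma I_diff: "f \<in> nichols_ideal p n \<Longrightarrow> g \<in> nichols_ideal p n \<Longrightarrow> (\<lambda>w. f w - g w) \<in> nichols_ideal p n"
  using I_add[of f p n "\<lambda>w. (-1) * g w"] I_smult[of g p n "-1"] by simp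

lemma I_zero: "(\<lambda>w. 0) \<in> nichols_ideal p n"
  unfolding nichols_ideal_def by (auto simp: tensor_zero hcomp_zero sym_zero)

lemma gen_sum: "(\<And>i. i < (N::nat) \<Longrightarrow> f i \<in> generated br n) \<Longrightarrow> (\<lambda>w. \<Sum>i<N. f i w) \<in> generated br n"
proof (induction N)
  case 0 then show ?case by (simp add: generated.gen_zero)
next
  case (Suc N)
  then have "(\<lambda>w. (\<Sum>i<N. f i w) + f N w) \<in> generated br n" by (intro generated.gen_add) auto
  then show ?case by simp
qed

lemma vspace_gen: "vspace n \<subseteq> generated br n"
proof
  fix u :: "nat list \<Rightarrow> 'a" assume u: "u \<in> vspace n"
  have eq: "u = (\<lambda>w. \<Sum>i<n. u [i] * gen_x i w)"
  proof
    fix w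
    show "u w = (\<Sum>i<n. u [i] * gen_x i w)"
    proof (cases "\<exists>i. w = [i] \<and> i < n")
      case True
      then obtain i where i: "w = [i]" "i < n" by blast
      have "(\<Sum>j<n. u [j] * gen_x j w) = (\<Sum>j<n. if j = i then u [i] else 0)"
        by (intro sum.cong) (auto simp: gen_x_def i)
      then show ?thesis using i by simp
    next
      case False
      then have "u w = 0" using u
        by (auto simp: vspace_def tensor_def) (metis One_nat_def length_0_conv length_Suc_conv lessThan_iff list.set_intros(1) subset_iff)
      moreover have "(\<Sum>j<n. u [j] * gen_x j w) = 0"
        using False by (intro sum.neutral) (auto simp: gen_x_def)
      ultimately show ?thesis by simp
    qed
  qed
  have "(\<lambda>w. \<Sum>i<n. u [i] * gen_x i w) \<in> generated br n"
    by (intro gen_sum generated.gen_smult generated.gen_basis)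
  then show "u \<in> generated br n" using eq by simp
qed

lemma image_V:
  fixes p :: "nat \<Rightarrow> nat \<Rightarrow> 'a::comm_ring_1"
  assumes good: "\<And>u. u \<in> generated br n \<Longrightarrow> tensor n u \<and> (\<lambda>w. u w - hcomp 1 u w) \<in> KS p"
  shows "nichols_image p n (generated br n) = nichols_V p n"
proof
  show "nichols_image p n (generated br n) \<subseteq> nichols_V p n"
  proof
    fix v assume "v \<in> nichols_image p n (generated br n)"
    then obtain u where u: "u \<in> generated br n" "(\<lambda>w. u w - v w) \<in> nichols_ideal p n"
      by (auto simp: nichols_image_def)
    have tu: "tensor n u" and Ku: "(\<lambda>w. u w - hcomp 1 u w) \<in> KS p" using good[OF u(1)] by auto
    have "(\<lambda>w. u w - hcomp 1 u w) \<in> nichols_ideal p n"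
      by (intro K_in_I Ku tensor_diff tu tensor_hcomp)
    then have "(\<lambda>w. (u w - v w) - (u w - hcomp 1 u w)) \<in> nichols_ideal p n"
      using I_diff[OF u(2)] by blast
    then have "(\<lambda>w. hcomp 1 u w - v w) \<in> nichols_ideal p n" by simp
    moreover have "hcomp 1 u \<in> vspace n" using tensor_hcomp[OF tu, of 1]
      by (auto simp: vspace_def hcomp_def split: if_splits)
    ultimately show "v \<in> nichols_V p n" by (auto simp: nichols_V_def nichols_image_def)
  qed
next
  show "nichols_V p n \<subseteq> nichols_image p n (generated br n)"
    using vspace_gen[of n br] by (auto simp: nichols_V_def nichols_image_def)
qed

theorem if_dir:
  fixes p :: "nat \<Rightarrow> nat \<Rightarrow> 'a::field"
  assumes C1: "\<forall>i<n. (p i i)^2 = 1"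
    and C2: "\<forall>i<n. \<forall>j<n. i \<noteq> j \<longrightarrow> p i j * p j i = 1 \<and> (p i j)^3 = 1"
  shows "nichols_L p n = nichols_V p n \<and> nichols_LR p n = nichols_V p n"
proof
  have C2': "\<forall>i<n. \<forall>j<n. i \<noteq> j \<longrightarrow> p i j * p j i = 1" using C2 by blast
  show "nichols_L p n = nichols_V p n" unfolding nichols_L_def
  proof (rule image_V)
    fix u assume "u \<in> generated (bbr p) n"
    have "tensor n u \<and> u [] = 0 \<and> (\<lambda>w. u w - hcomp 1 u w) \<in> KS p"
    proof (rule gen_good[of "bbr p" "\<lambda>a b. 1" "\<lambda>a b. chi p b a"])
      show "u \<in> generated (bbr p) n" by fact
      show "\<And>u v. tensor n u \<Longrightarrow> tensor n v \<Longrightarrow> (\<forall>w. length w \<noteq> 1 \<longrightarrow> u w = 0)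
        \<Longrightarrow> (\<forall>w. length w \<noteq> 1 \<longrightarrow> v w = 0) \<Longrightarrow> killed p 0 (bbr p u v)"
        by (rule deg1_bbr[OF C1 C2'])
    qed (auto simp: bbr_tprod chi_swp_left chi_swp_right)
    then show "tensor n u \<and> (\<lambda>w. u w - hcomp 1 u w) \<in> KS p" by simp
  qed
  show "nichols_LR p n = nichols_V p n" unfolding nichols_LR_def
  proof (rule image_V)
    fix u assume "u \<in> generated (rbr p) n"
    have "tensor n u \<and> u [] = 0 \<and> (\<lambda>w. u w - hcomp 1 u w) \<in> KS p"
    proof (rule gen_good[of "rbr p" "chi p" "chi p"])
      show "u \<in> generated (rbr p) n" by fact
      show "\<And>u v. tensor n u \<Longrightarrow> tensor n v \<Longrightarrow> (\<forall>w. length w \<noteq> 1 \<longrightarrow> u w = 0)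
        \<Longrightarrow> (\<forall>w. length w \<noteq> 1 \<longrightarrow> v w = 0) \<Longrightarrow> killed p 0 (rbr p u v)"
        by (rule deg1_rbr[OF C2])
    qed (auto simp: rbr_tprod chi_swp_left chi_swp_right)
    then show "tensor n u \<and> (\<lambda>w. u w - hcomp 1 u w) \<in> KS p" by simp
  qed
qed

lemma perm2: "{s. s permutes {..<2::nat}} = {id, tau 0}"
proof -
  have "{..<2::nat} = {0, Suc 0}" by auto
  then show ?thesis using permutes_doubleton_iff[of _ "0::nat" "Suc 0"] by auto
qed

lemma sym2: "symmetrizer p 2 (hcomp 2 d) [a,b] = d [a,b] + p b a * d [b,a]"
proof -
  let ?t = "tau 0"
  have ne: "id \<noteq> ?t" by (auto simp: fun_eq_iff transpose_def)
  have e0: "{(x,y). x < y \<and> y < (2::nat) \<and> id y < id x} = {}" by auto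
  have b1: "braid_coef p 2 id v = 1" for v unfolding braid_coef_def by (simp only: e0 prod.empty)
  have "{(x,y). x < y \<and> y < (2::nat) \<and> ?t y < ?t x} = {(0,1)}"
    by (auto simp: transpose_def)
  then have b2: "braid_coef p 2 ?t v = p (v!0) (v!1)" for v by (simp add: braid_coef_def)
  have w1: "permute_word id [a,b] = [a,b]" by (simp add: permute_word_def upt_rec)
  have w2: "permute_word ?t [a,b] = [b,a]" by (simp add: permute_word_def upt_rec)
  show ?thesis unfolding symmetrizer_def perm2 using ne
    by (simp add: b1 b2 w1 w2 hcomp_def)
qed

lemma I2: "d \<in> nichols_ideal p n \<Longrightarrow> d [a,b] + p b a * d [b,a] = 0"
proof -
  assume "d \<in> nichols_ideal p n"
  then have "symmetrizer p 2 (hcomp 2 d) = (\<lambda>_. 0)" by (simp add: nichols_ideal_def)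
  then have "symmetrizer p 2 (hcomp 2 d) [a,b] = 0" by simp
  then show ?thesis by (simp add: sym2)
qed

lemma bbr_2: "u [] = 0 \<Longrightarrow> v [] = 0 \<Longrightarrow> bbr p u v [a,b] = u [a] * v [b] - p b a * u [b] * v [a]"
  by (simp add: bbr_tprod tprod_def numeral_2_eq_2 chi_11)

lemma rbr_2: "u [] = 0 \<Longrightarrow> v [] = 0 \<Longrightarrow> rbr p u v [a,b] = p a b * (u [a] * v [b] - u [b] * v [a])"
  by (simp add: rbr_tprod tprod_def numeral_2_eq_2 chi_11 algebra_simps)

lemma bbr_nil: "bbr p u v [] = 0"
  by (simp add: bbr_def chi_def)

lemma rbr_nil: "rbr p u v [] = 0"
  by (simp add: rbr_def chi_def)

lemma invR: "u \<in> generated (rbr p) n \<Longrightarrow> u [] = 0 \<and> (\<forall>a b. p b a * u [a,b] + p a b * u [b,a] = 0)"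
proof (induction u rule: generated.induct)
  case (gen_basis i) then show ?case by (simp add: gen_x_def)
next
  case gen_zero then show ?case by simp
next
  case (gen_add u v) then show ?case by (simp add: algebra_simps)
next
  case (gen_smult u c)
  then show ?case by (auto simp: algebra_simps) (metis mult.left_commute mult_zero_right distrib_left)
next
  case (gen_br u v) then show ?case by (simp add: rbr_nil rbr_2 algebra_simps)
qed

lemma invB:
  assumes q: "p i j * p j i = 1"
  shows "u \<in> generated (bbr p) n \<Longrightarrow> u [] = 0 \<and> u [j,i] + p i j * u [i,j] = 0"
proof (induction u rule: generated.induct)
  case (gen_basis i) then show ?case by (simp add: gen_x_def)
next
  case gen_zero then show ?case by simp
next
  case (gen_add u v) then show ?case by (simp add: algebra_simps)
next
  case (gen_smult u c)
  then show ?case by (auto simp: algebra_simps) (metis mult.left_commute mult_zero_right distrib_left)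
next
  case (gen_br u v)
  have "u [j] * v [i] - p i j * u [i] * v [j] + p i j * (u [i] * v [j] - p j i * u [j] * v [i])
        = u [j] * v [i] * (1 - p i j * p j i)" by (simp add: algebra_simps)
  then show ?case using gen_br q by (simp add: bbr_nil bbr_2)
qed

lemma gen_in_image: "z \<in> S \<Longrightarrow> z \<in> nichols_image p n S"
proof -
  assume "z \<in> S"
  moreover have "(\<lambda>w. z w - z w) \<in> nichols_ideal p n" using I_zero[of p n] by simp
  ultimately show ?thesis unfolding nichols_image_def by blast
qed

lemma gen_x_nil: "gen_x i [] = 0"
  by (simp add: gen_x_def)

lemma gen_x_1: "gen_x i [a] = (if a = i then 1 else 0)"
  by (simp add: gen_x_def)

lemma onlyif_a:
  fixes p :: "nat \<Rightarrow> nat \<Rightarrow> 'a::field_char_0"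
  assumes nz: "\<forall>i<n. \<forall>j<n. p i j \<noteq> 0" and eq: "nichols_L p n = nichols_LR p n" and i: "i < n"
  shows "(p i i)^2 = 1"
proof -
  define z where "z = bbr p (gen_x i) (gen_x i)"
  have "z \<in> generated (bbr p) n" unfolding z_def by (intro generated.gen_br generated.gen_basis i)
  then have "z \<in> nichols_L p n" unfolding nichols_L_def by (rule gen_in_image)
  then have "z \<in> nichols_LR p n" using eq by simp
  then obtain u where u: "u \<in> generated (rbr p) n" "(\<lambda>w. u w - z w) \<in> nichols_ideal p n"
    by (auto simp: nichols_LR_def nichols_image_def)
  have zi: "z [i,i] = 1 - p i i" by (simp add: z_def bbr_2 gen_x_nil gen_x_1)
  have "(u [i,i] - z [i,i]) + p i i * (u [i,i] - z [i,i]) = 0" using I2[OF u(2), of i i] by simp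
  moreover have "p i i * u [i,i] + p i i * u [i,i] = 0" using invR[OF u(1)] by blast
  then have "2 * p i i * u [i,i] = 0" by simp
  then have "u [i,i] = 0" using nz i by simp
  ultimately have "(p i i - 1) * (1 + p i i) = 0" using zi by (simp add: algebra_simps)
  then have "(p i i)^2 - 1 = 0" by (simp add: algebra_simps power2_eq_square)
  then show ?thesis by simp
qed

lemma onlyif_b1:
  fixes p :: "nat \<Rightarrow> nat \<Rightarrow> 'a::field_char_0"
  assumes eq: "nichols_L p n = nichols_LR p n" and x: "x < n" and y: "y < n" and xy: "x \<noteq> y"
    and q: "p x y * p y x \<noteq> 1"
  shows "p y x = (p x y)^2"
proof -
  define z where "z = bbr p (gen_x x) (gen_x y)"
  have "z \<in> generated (bbr p) n" unfolding z_def by (intro generated.gen_br generated.gen_basis x y)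
  then have "z \<in> nichols_L p n" unfolding nichols_L_def by (rule gen_in_image)
  then have "z \<in> nichols_LR p n" using eq by simp
  then obtain u where u: "u \<in> generated (rbr p) n" "(\<lambda>w. u w - z w) \<in> nichols_ideal p n"
    by (auto simp: nichols_LR_def nichols_image_def)
  have z1: "z [x,y] = 1" "z [y,x] = - p x y" using xy by (simp_all add: z_def bbr_2 gen_x_nil gen_x_1)
  define d1 where "d1 = u [x,y] - z [x,y]"
  define d2 where "d2 = u [y,x] - z [y,x]"
  have e1: "d1 + p y x * d2 = 0" using I2[OF u(2), of x y] by (simp add: d1_def d2_def)
  have e2: "d2 + p x y * d1 = 0" using I2[OF u(2), of y x] by (simp add: d1_def d2_def)
  have "d1 * (1 - p x y * p y x) = 0" using e1 e2
  proof -
    have "d2 = - p x y * d1" using e2 by (simp add: algebra_simps eq_neg_iff_add_eq_0)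
    then show ?thesis using e1 by (simp add: algebra_simps)
  qed
  then have "d1 = 0" using q by simp
  then have "d2 = 0" using e2 by simp
  have "p y x * u [x,y] + p x y * u [y,x] = 0" using invR[OF u(1)] by blast
  moreover have "u [x,y] = 1" "u [y,x] = - p x y" using \<open>d1 = 0\<close> \<open>d2 = 0\<close> z1
    by (simp_all add: d1_def d2_def eq_neg_iff_add_eq_0)
  ultimately have "p y x - p x y * p x y = 0" by simp
  then show ?thesis by (simp add: power2_eq_square)
qed

lemma onlyif_b:
  fixes p :: "nat \<Rightarrow> nat \<Rightarrow> 'a::field_char_0"
  assumes nz: "\<forall>i<n. \<forall>j<n. p i j \<noteq> 0" and eq: "nichols_L p n = nichols_LR p n"
    and i: "i < n" and j: "j < n" and ij: "i \<noteq> j"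
  shows "p i j * p j i = 1"
proof (rule ccontr)
  assume q: "p i j * p j i \<noteq> 1"
  have h1: "p j i = (p i j)^2" by (rule onlyif_b1[OF eq i j ij q])
  have q': "p j i * p i j \<noteq> 1" using q by (simp add: mult.commute)
  have h2: "p i j = (p j i)^2" by (rule onlyif_b1[OF eq j i ij[symmetric] q'])
  have "p i j = ((p i j)^2)^2" using h1 h2 by metis
  also have "\<dots> = p i j * (p i j)^3" by (simp add: power2_eq_square power3_eq_cube)
  finally have "p i j * 1 = p i j * (p i j)^3" by simp
  then have "(p i j)^3 = 1" using nz i j by (metis mult_left_cancel)
  moreover have "p i j * p j i = (p i j)^3" using h1 by (simp add: power2_eq_square power3_eq_cube)
  ultimately show False using q by simp
qed

lemma onlyif_c:
  fixes p :: "nat \<Rightarrow> nat \<Rightarrow> 'a::field_char_0"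
  assumes nz: "\<forall>i<n. \<forall>j<n. p i j \<noteq> 0" and eq: "nichols_L p n = nichols_LR p n"
    and i: "i < n" and j: "j < n" and ij: "i \<noteq> j"
  shows "(p i j)^3 = 1"
proof -
  have q: "p i j * p j i = 1" by (rule onlyif_b[OF nz eq i j ij])
  define z where "z = rbr p (gen_x i) (gen_x j)"
  have "z \<in> generated (rbr p) n" unfolding z_def by (intro generated.gen_br generated.gen_basis i j)
  then have "z \<in> nichols_LR p n" unfolding nichols_LR_def by (rule gen_in_image)
  then have "z \<in> nichols_L p n" using eq by simp
  then obtain u where u: "u \<in> generated (bbr p) n" "(\<lambda>w. u w - z w) \<in> nichols_ideal p n"
    by (auto simp: nichols_L_def nichols_image_def)
  have z1: "z [i,j] = p i j" "z [j,i] = - p j i" using ij by (simp_all add: z_def rbr_2 gen_x_nil gen_x_1)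
  have e1: "(u [j,i] - z [j,i]) + p i j * (u [i,j] - z [i,j]) = 0" using I2[OF u(2), of j i] by simp
  have e2: "u [j,i] + p i j * u [i,j] = 0" using invB[OF q u(1)] by blast
  have "z [j,i] + p i j * z [i,j] = (u [j,i] + p i j * u [i,j]) - ((u [j,i] - z [j,i]) + p i j * (u [i,j] - z [i,j]))"
    by (simp add: algebra_simps)
  also have "\<dots> = 0" using e1 e2 by simp
  finally have "z [j,i] + p i j * z [i,j] = 0" .
  then have "p i j * p i j - p j i = 0" using z1 by simp
  then have "p i j * (p i j * p i j - p j i) = 0" by simp
  then have "(p i j)^3 - p i j * p j i = 0" by (simp add: algebra_simps power3_eq_cube)
  then show ?thesis using q by simp
qed


theorem proposition5p1:
  fixes p :: "nat \<Rightarrow> nat \<Rightarrow> 'a::field_char_0" and n :: nat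
  assumes "\<forall>i<n. \<forall>j<n. p i j \<noteq> 0"
  shows "(nichols_L p n = nichols_LR p n \<longleftrightarrow>
          (\<forall>i<n. (p i i)^2 = 1) \<and>
          (\<forall>i<n. \<forall>j<n. i \<noteq> j \<longrightarrow> p i j * p j i = 1 \<and> (p i j)^3 = 1))
       \<and> (nichols_L p n = nichols_LR p n \<longrightarrow>
          nichols_L p n = nichols_V p n \<and> nichols_LR p n = nichols_V p n)"
  proof -
  have OI: "(\<forall>i<n. (p i i)^2 = 1) \<and> (\<forall>i<n. \<forall>j<n. i \<noteq> j \<longrightarrow> p i j * p j i = 1 \<and> (p i j)^3 = 1)"
    if eq: "nichols_L p n = nichols_LR p n"
    using onlyif_a[OF assms eq] onlyif_b[OF assms eq] onlyif_c[OF assms eq] by blast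
  have IF: "nichols_L p n = nichols_V p n \<and> nichols_LR p n = nichols_V p n"
    if "(\<forall>i<n. (p i i)^2 = 1) \<and> (\<forall>i<n. \<forall>j<n. i \<noteq> j \<longrightarrow> p i j * p j i = 1 \<and> (p i j)^3 = 1)"
    using if_dir[of n p] that by blast
  show ?thesis using OI IF by metis
qed

end
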